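(* Let $\lambda \geq 0$, $0 \leq \gamma \leq 1$, $0\leq \beta<1$, $\tau \in \mathbb{C}\setminus\{0\}$, $\delta \in \mathbb{N}_0=\{0,1,2,\dots\}$ and $m \in \mathbb{N}$. Let $f(z)=z+\sum_{k=1}^{\infty} a_{mk+1}z^{mk+1}$ belong to the class $\Theta_{\Sigma_m}(\tau,\lambda,\gamma,\delta;\beta)$. Then $$|a_{m+1}| \leq \min\left\{\frac{2|\tau|(1-\beta)}{(\delta+1)\left(1+m(\lambda+\gamma)+\lambda\gamma\left((m+1)^2+1\right)\right)},\ 2\sqrt{\frac{2|\tau|(1-\beta)}{(\delta+1)(\delta+2)(m+1)\Phi_1(\lambda,\gamma,m)}}\right\}$$ and $$|a_{2m+1}| \leq \frac{4|\tau|(1-\beta)}{(\delta+1)(\delta+2)\left(1+2(\lambda+\gamma)m+\lambda\gamma\left((2m+1)^2+1\right)\right)},$$ where $\Phi_1(\lambda,\gamma,m)=1+2(\lambda+\gamma)m+\lambda\gamma\left((2m+1)^2+1\right)$.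
   Context: Let $\mathbb{U}=\{z\in\mathbb{C}:|z|<1\}$ and $m\in\mathbb{N}$. $\mathcal{A}_m$ denotes the class of functions analytic in $\mathbb{U}$ of the form $f(z)=z+\sum_{k=1}^{\infty}a_{mk+1}z^{mk+1}$. $\Sigma_m$ denotes the class of $m$-fold symmetric bi-univalent functions: functions $f\in\mathcal{A}_m$ univalent in $\mathbb{U}$ whose inverse $f^{-1}$ extends to a univalent function $g$ on $\mathbb{U}$; this $g$ has the expansion $g(w)=w-a_{m+1}w^{m+1}+\left[(m+1)a_{m+1}^2-a_{2m+1}\right]w^{2m+1}-\cdots$. For $\delta\in\mathbb{N}_0$ and $h(z)=z+\sum_{k\ge1}c_{mk+1}z^{mk+1}$ analytic in $\mathbb{U}$, the $m$-fold Ruscheweyh derivative is $\mathcal{R}^\delta h(z)=z+\sum_{k=1}^{\infty}\frac{\Gamma(\delta+k+1)}{\Gamma(k+1)\Gamma(\delta+1)}c_{mk+1}z^{mk+1}$. For such $h$ and parameters $\lambda,\gamma,\tau\neq0,\delta$, put $$J_h(z)=1+\frac{1}{\tau}\Big[(1-\lambda)(1-\gamma)\frac{\mathcal{R}^\delta h(z)}{z}+(\lambda(\gamma+1)+\gamma)(\mathcal{R}^\delta h)'(z)+\lambda\gamma\big(z(\mathcal{R}^\delta h)''(z)-2\big)-1\Big].$$ For $0\le\beta<1$, $\Theta_{\Sigma_m}(\tau,\lambda,\gamma,\delta;\beta)$ is the set of $f\in\Sigma_m$ such that $\operatorname{Re}J_f(z)>\beta$ for all $z\in\mathbb{U}$ and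 $\operatorname{Re}J_g(w)>\beta$ for all $w\in\mathbb{U}$, where $g$ is the extension of $f^{-1}$ to $\mathbb{U}$. *)

theory Defs
  imports "HOL-Analysis.Analysis"
begin

definition tcoef :: "(complex \<Rightarrow> complex) \<Rightarrow> nat \<Rightarrow> complex" where
  "tcoef h n = (deriv ^^ n) h 0 / of_nat (fact n)"

text \<open>The class A_m: analytic in the unit disc, normalised, with Taylor expansion
  z + sum over k of a_(mk+1) z^(mk+1) (all other coefficients vanish).\<close>
definition A_m :: "nat \<Rightarrow> (complex \<Rightarrow> complex) \<Rightarrow> bool" where
  "A_m m h \<longleftrightarrow> h holomorphic_on ball 0 1 \<and> h 0 = 0 \<and> tcoef h 1 = 1 \<and>
     (\<forall>n. n mod m \<noteq> 1 mod m \<longrightarrow> tcoef h n = 0)"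

definition inv_ext :: "(complex \<Rightarrow> complex) \<Rightarrow> (complex \<Rightarrow> complex) \<Rightarrow> bool" where
  "inv_ext f g \<longleftrightarrow> g holomorphic_on ball 0 1 \<and> inj_on g (ball 0 1) \<and>
     (\<forall>z\<in>ball 0 1. f z \<in> ball 0 1 \<longrightarrow> g (f z) = z)"

definition Sigma_m :: "nat \<Rightarrow> (complex \<Rightarrow> complex) \<Rightarrow> bool" where
  "Sigma_m m f \<longleftrightarrow> A_m m f \<and> inj_on f (ball 0 1) \<and> (\<exists>g. inv_ext f g)"

text \<open>The m-fold Ruscheweyh derivative divided by z, i.e.
  1 + sum_k Gamma(delta+k+1)/(Gamma(k+1) Gamma(delta+1)) c_(mk+1) z^(mk);
  for natural delta the Gamma quotient equals (delta+k choose k).\<close>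
definition rusch_quot :: "nat \<Rightarrow> nat \<Rightarrow> (complex \<Rightarrow> complex) \<Rightarrow> complex \<Rightarrow> complex" where
  "rusch_quot m \<delta> h z = 1 + (\<Sum>k. of_nat ((\<delta> + Suc k) choose (Suc k)) * tcoef h (m * Suc k + 1) * z ^ (m * Suc k))"

definition rusch :: "nat \<Rightarrow> nat \<Rightarrow> (complex \<Rightarrow> complex) \<Rightarrow> complex \<Rightarrow> complex" where
  "rusch m \<delta> h z = z * rusch_quot m \<delta> h z"

definition J_fun :: "nat \<Rightarrow> complex \<Rightarrow> real \<Rightarrow> real \<Rightarrow> nat \<Rightarrow> (complex \<Rightarrow> complex) \<Rightarrow> complex \<Rightarrow> complex" where
  "J_fun m \<tau> lam \<gamma> \<delta> h z = 1 + (1 / \<tau>) *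
     (of_real ((1 - lam) * (1 - \<gamma>)) * rusch_quot m \<delta> h z
      + of_real (lam * (\<gamma> + 1) + \<gamma>) * deriv (rusch m \<delta> h) z
      + of_real (lam * \<gamma>) * (z * deriv (deriv (rusch m \<delta> h)) z - 2) - 1)"

definition Theta :: "nat \<Rightarrow> complex \<Rightarrow> real \<Rightarrow> real \<Rightarrow> nat \<Rightarrow> real \<Rightarrow> (complex \<Rightarrow> complex) \<Rightarrow> bool" where
  "Theta m \<tau> lam \<gamma> \<delta> \<beta> f \<longleftrightarrow> Sigma_m m f \<and>
     (\<exists>g. inv_ext f g \<and>
        (\<forall>z\<in>ball 0 1. Re (J_fun m \<tau> lam \<gamma> \<delta> f z) > \<beta>) \<and>
        (\<forall>w\<in>ball 0 1. Re (J_fun m \<tau> lam \<gamma> \<delta> g w) > \<beta>))"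

definition Phi1 :: "real \<Rightarrow> real \<Rightarrow> nat \<Rightarrow> real" where
  "Phi1 lam \<gamma> m = 1 + 2 * (lam + \<gamma>) * real m + lam * \<gamma> * ((2 * real m + 1)^2 + 1)"

end

theory Submission
  imports Defs "HOL-Complex_Analysis.Complex_Analysis"
begin


lemma carath_r:
  fixes q :: "complex \<Rightarrow> complex" and r :: real
  assumes hol: "q holomorphic_on ball 0 1" and re: "\<And>z. z \<in> ball 0 1 \<Longrightarrow> Re (q z) \<ge> 0"
    and n: "n \<ge> 1" and r: "0 < r" "r < 1"
  shows "norm ((deriv^^n) q 0 / fact n) * r^n \<le> 2 * Re (q 0)"
proof -
  define D where "D = (deriv^^n) q 0 / fact n"
  define e where "e = (\<lambda>t::real. exp (2 * of_real pi * \<i> * of_real t))"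
  define w where "w = (\<lambda>t. q (of_real r * e t))"
  have ne: "norm (e t) = 1" for t unfolding e_def by (simp add: norm_exp_eq_Re)
  have enz: "e t \<noteq> 0" for t unfolding e_def by simp
  have ec: "cnj (e t) = inverse (e t)" for t
    unfolding e_def by (simp add: exp_cnj exp_minus[symmetric])
  have circ: "circlepath 0 r t = of_real r * e t" for t by (simp add: circlepath e_def)
  have vd: "vector_derivative (circlepath 0 r) (at t within {0..1}) = 2 * pi * \<i> * r * e t"
    if "t \<in> {0..1}" for t using that by (simp add: vector_derivative_circlepath01 e_def)
  have sub: "cball 0 r \<subseteq> ball (0::complex) 1" using r by auto
  have cont: "continuous_on (cball 0 r) q"
    using holomorphic_on_imp_continuous_on[OF hol] continuous_on_subset sub by blast
  have holr: "q holomorphic_on ball 0 r" using hol by (rule holomorphic_on_subset) (use r in auto)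
  have w0: "0 \<in> ball (0::complex) r" using r by simp
  note A0 = Cauchy_has_contour_integral_higher_derivative_circlepath[OF cont holr w0, of n]
  note C0 = Cauchy_has_contour_integral_higher_derivative_circlepath[OF cont holr w0, of 0]
  have B0: "((\<lambda>u. q u * u^(n-1)) has_contour_integral 0) (circlepath 0 r)"
    by (rule Cauchy_theorem_starlike_simple[of "ball 0 1"])
       (use r in \<open>auto intro!: holomorphic_intros hol convex_imp_starlike simp: path_image_circlepath_nonneg\<close>)
  have A: "((\<lambda>t. w t * cnj (e t)^n) has_integral (of_real (r^n) * D)) {0..1}"
  proof -
    from A0 have "((\<lambda>t. q (circlepath 0 r t) / (circlepath 0 r t - 0)^Suc n * vector_derivative (circlepath 0 r) (at t within {0..1}))
       has_integral (2 * pi * \<i> / fact n * (deriv^^n) q 0)) {0..1}" unfolding has_contour_integral_def .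
    then have "((\<lambda>t. (2 * pi * \<i> / of_real (r^n)) * (w t * cnj (e t)^n))
       has_integral (2 * pi * \<i> / fact n * (deriv^^n) q 0)) {0..1}"
      by (rule has_integral_eq[rotated]) (use r enz in \<open>simp add: vd circ w_def ec field_simps power_inverse\<close>)
    from has_integral_mult_right[OF this, of "of_real (r^n) / (2 * pi * \<i>)"]
    show ?thesis using r by (simp add: D_def field_simps)
  qed
  have B: "((\<lambda>t. w t * e t ^ n) has_integral 0) {0..1}"
  proof -
    from B0 have "((\<lambda>t. q (circlepath 0 r t) * (circlepath 0 r t)^(n-1) * vector_derivative (circlepath 0 r) (at t within {0..1}))
       has_integral 0) {0..1}" unfolding has_contour_integral_def .
    then have "((\<lambda>t. (2 * pi * \<i> * of_real (r^n)) * (w t * e t ^ n)) has_integral 0) {0..1}"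
      by (rule has_integral_eq[rotated]) (use r enz n in \<open>auto simp add: vd circ w_def field_simps power_mult_distrib Suc_le_eq dest!: gr0_implies_Suc\<close>)
    from has_integral_mult_right[OF this, of "1 / (2 * pi * \<i> * of_real (r^n))"]
    show ?thesis using r by simp
  qed
  have C: "(w has_integral q 0) {0..1}"
  proof -
    from C0 have "((\<lambda>t. q (circlepath 0 r t) / (circlepath 0 r t - 0)^Suc 0 * vector_derivative (circlepath 0 r) (at t within {0..1}))
       has_integral (2 * pi * \<i> * q 0)) {0..1}" using C0 unfolding has_contour_integral_def by (simp only: fact_0 funpow_0 id_apply of_nat_1 div_by_1)
    then have "((\<lambda>t. (2 * pi * \<i>) * w t) has_integral (2 * pi * \<i> * q 0)) {0..1}"
      by (rule has_integral_eq[rotated]) (use r enz in \<open>simp add: vd circ w_def field_simps\<close>)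
    from has_integral_mult_right[OF this, of "1 / (2 * pi * \<i>)"]
    show ?thesis by simp
  qed
  have Bc: "((\<lambda>t. cnj (w t) * cnj (e t)^n) has_integral 0) {0..1}"
    using has_integral_cnj[THEN iffD2, OF B] by (simp add: o_def)
  have S: "((\<lambda>t. complex_of_real (2 * Re (w t)) * cnj (e t)^n) has_integral (of_real (r^n) * D)) {0..1}"
  proof -
    have "((\<lambda>x. w x * cnj (e x) ^ n + cnj (w x) * cnj (e x) ^ n) has_integral (of_real (r^n) * D)) {0..1}"
      using has_integral_add[OF A Bc] by simp
    then show ?thesis by (rule has_integral_eq[rotated]) (simp only: distrib_right[symmetric] complex_add_cnj)
  qed
  have CR: "((\<lambda>t. 2 * Re (w t)) has_integral 2 * Re (q 0)) {0..1}"
    using has_integral_mult_right[OF has_integral_Re[OF C], of 2] by simp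
  have wpos: "Re (w t) \<ge> 0" for t
    unfolding w_def using r by (intro re) (simp add: norm_mult ne)
  have "norm (integral {0..1} (\<lambda>t. complex_of_real (2 * Re (w t)) * cnj (e t)^n))
        \<le> integral {0..1} (\<lambda>t. 2 * Re (w t))"
    by (rule integral_norm_bound_integral)
       (use S CR wpos in \<open>auto simp: norm_mult norm_power ne\<close>)
  then have "norm (of_real (r^n) * D) \<le> 2 * Re (q 0)"
    using integral_unique[OF S] integral_unique[OF CR] by simp
  then have "r^n * norm D \<le> 2 * Re (q 0)" using r by (simp add: norm_mult norm_power)
  then show ?thesis by (simp add: D_def mult.commute)
qed



lemma carath:
  fixes p :: "complex \<Rightarrow> complex"
  assumes hol: "p holomorphic_on ball 0 1" and re: "\<And>z. z \<in> ball 0 1 \<Longrightarrow> Re (p z) > \<beta>"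
    and n: "n \<ge> 1"
  shows "norm ((deriv^^n) p 0 / fact n) \<le> 2 * (Re (p 0) - \<beta>)"
proof -
  define q where "q = (\<lambda>z. p z - of_real \<beta>)"
  have holq: "q holomorphic_on ball 0 1" unfolding q_def by (intro holomorphic_intros hol)
  have req: "Re (q z) \<ge> 0" if "z \<in> ball 0 1" for z using re[OF that] by (simp add: q_def)
  have dq: "(deriv^^n) q 0 = (deriv^^n) p 0"
    unfolding q_def using n
    by (subst higher_deriv_diff[of _ "ball 0 1"]) (auto intro: hol holomorphic_intros)
  have ev: "\<forall>\<^sub>F r in at_left (1::real). norm ((deriv^^n) p 0 / fact n) * r^n \<le> 2 * (Re (p 0) - \<beta>)"
    using eventually_at_left_real[of 0 "1::real"]
  proof (rule eventually_mono)
    fix r :: real assume "r \<in> {0<..<1}"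
    hence "0 < r" "r < 1" by auto
    from carath_r[OF holq req n this] have "norm ((deriv^^n) q 0 / fact n) * r^n \<le> 2 * Re (q 0)" .
    thus "norm ((deriv^^n) p 0 / fact n) * r^n \<le> 2 * (Re (p 0) - \<beta>)"
      unfolding dq by (simp add: q_def)
  qed simp
  have lim: "((\<lambda>r. norm ((deriv^^n) p 0 / fact n) * r^n) \<longlongrightarrow> norm ((deriv^^n) p 0 / fact n) * 1^n) (at_left (1::real))"
    by (intro tendsto_intros)
  show ?thesis using tendsto_upperbound[OF lim ev] by simp
qed

lemma conv_radius_compare:
  fixes a b :: "nat \<Rightarrow> complex"
  assumes "\<And>n. n \<ge> 1 \<Longrightarrow> norm (a n) \<le> norm (b n)"
  shows "conv_radius a \<ge> conv_radius b"
proof (rule conv_radius_geI_ex')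
  fix r :: real assume r: "0 < r" "ereal r < conv_radius b"
  have "summable (\<lambda>n. norm (b n * of_real r ^ n))" by (rule abs_summable_in_conv_radius) (use r in simp)
  then show "summable (\<lambda>n. a n * of_real r ^ n)"
    by (rule summable_comparison_test'[where N=1])
       (use r assms in \<open>auto simp: norm_mult norm_power intro!: mult_right_mono\<close>)
qed

lemma Q_conv:
  fixes H :: "complex fps"
  shows "fps_conv_radius (Abs_fps (\<lambda>n. of_nat ((\<delta>+n) choose \<delta>) * H $ (n+1))) \<ge> fps_conv_radius H"
proof (induction \<delta>)
  case 0
  have "Abs_fps (\<lambda>n. of_nat ((0+n) choose 0) * H $ (n+1)) = fps_shift 1 H" by (simp add: fps_eq_iff)
  then show ?case by simp
next
  case (Suc d)
  define Q where "Q = Abs_fps (\<lambda>n. of_nat ((d+n) choose d) * H $ (n+1))"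
  have eq: "Abs_fps (\<lambda>n. of_nat ((Suc d+n) choose Suc d) * H $ (n+1)) =
     fps_const (1 / of_nat (Suc d)) * (fps_X * fps_deriv Q + fps_const (of_nat (Suc d)) * Q)"
  proof (rule fps_ext)
    fix n
    have nat: "Suc d * ((Suc d + n) choose Suc d) = (Suc d + n) * ((d+n) choose d)"
      using Suc_times_binomial[of d "d+n"] by simp
    hence "of_nat (Suc d) * (of_nat ((Suc d + n) choose Suc d) :: complex) = of_nat (Suc d + n) * of_nat ((d+n) choose d)"
      by (metis of_nat_mult)
    hence nat': "of_nat ((Suc d + n) choose Suc d) = (of_nat (Suc d + n) * of_nat ((d+n) choose d) / of_nat (Suc d) :: complex)"
      by (simp add: field_simps del: binomial_Suc_Suc of_nat_Suc)
    have dnz: "1 + (of_nat d::complex) \<noteq> 0"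
      by (metis of_nat_Suc of_nat_eq_0_iff nat.distinct(1) add.commute)
    have Xd: "(fps_X * fps_deriv Q) $ n = of_nat n * Q $ n" by (cases n) simp_all
    have "Abs_fps (\<lambda>n. of_nat ((Suc d+n) choose Suc d) * H $ (n+1)) $ n = of_nat ((Suc d+n) choose Suc d) * H $ (n+1)"
      by simp
    also have "\<dots> = (of_nat (Suc d + n) * of_nat ((d+n) choose d) / of_nat (Suc d)) * H $ (n+1)"
      by (simp only: nat')
    also have "\<dots> = (of_nat n + of_nat (Suc d)) * Q $ n / of_nat (Suc d)"
      by (simp add: Q_def)
    also have "\<dots> = (1 / of_nat (Suc d)) * (of_nat n * Q$n + of_nat (Suc d) * Q$n)"
      using dnz by (simp add: field_simps)
    also have "\<dots> = (fps_const (1 / of_nat (Suc d)) * (fps_X * fps_deriv Q + fps_const (of_nat (Suc d)) * Q)) $ n"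
      by (simp only: fps_mult_left_const_nth fps_add_nth Xd)
    finally show "Abs_fps (\<lambda>n. of_nat ((Suc d+n) choose Suc d) * H $ (n+1)) $ n =
      (fps_const (1 / of_nat (Suc d)) * (fps_X * fps_deriv Q + fps_const (of_nat (Suc d)) * Q)) $ n" .
  qed
  have "fps_conv_radius Q \<le> fps_conv_radius (fps_X * fps_deriv Q)"
    using fps_conv_radius_mult[of fps_X "fps_deriv Q"] fps_conv_radius_deriv[of Q] by simp
  moreover have "fps_conv_radius Q \<le> fps_conv_radius (fps_const (of_nat (Suc d)) * Q)"
    using fps_conv_radius_mult[of "fps_const (of_nat (Suc d))" Q] by simp
  ultimately have "fps_conv_radius Q \<le> fps_conv_radius (fps_X * fps_deriv Q + fps_const (of_nat (Suc d)) * Q)"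
    using fps_conv_radius_add[of "fps_X * fps_deriv Q" "fps_const (of_nat (Suc d)) * Q"] by (meson min.boundedI order.trans)
  also have "\<dots> \<le> fps_conv_radius (fps_const (1 / of_nat (Suc d)) * (fps_X * fps_deriv Q + fps_const (of_nat (Suc d)) * Q))"
    using fps_conv_radius_mult[of "fps_const (1 / of_nat (Suc d))" "fps_X * fps_deriv Q + fps_const (of_nat (Suc d)) * Q"] by simp
  finally show ?case using Suc.IH unfolding eq Q_def by order
qed

definition RF :: "nat \<Rightarrow> nat \<Rightarrow> (complex \<Rightarrow> complex) \<Rightarrow> complex fps" where
  "RF m \<delta> h = Abs_fps (\<lambda>n. if n = 0 then 1 else if m dvd n then
      of_nat ((\<delta> + n div m) choose (n div m)) * tcoef h (n+1) else 0)"

lemma fps_expansion_tcoef: "fps_expansion h 0 $ n = tcoef h n"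
  by (simp add: fps_expansion_def tcoef_def)

lemma RF_conv:
  assumes m: "m \<ge> 1" and hol: "h holomorphic_on ball 0 1"
  shows "fps_conv_radius (RF m \<delta> h) \<ge> 1"
proof -
  define H where "H = fps_expansion h 0"
  have "1 \<le> fps_conv_radius H" unfolding H_def
    using conv_radius_fps_expansion[of h 0 1] hol by (simp add: one_ereal_def)
  also have "\<dots> \<le> fps_conv_radius (Abs_fps (\<lambda>n. of_nat ((\<delta>+n) choose \<delta>) * H $ (n+1)))"
    by (rule Q_conv)
  also have "\<dots> \<le> fps_conv_radius (RF m \<delta> h)"
    unfolding fps_conv_radius_def
  proof (rule conv_radius_compare)
    fix n :: nat assume n: "n \<ge> 1"
    have "(\<delta> + n div m) choose (n div m) = (\<delta> + n div m) choose \<delta>"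
      by (subst binomial_symmetric) auto
    also have "\<dots> \<le> (\<delta> + n) choose \<delta>"
      by (rule binomial_right_mono) (simp add: div_le_dividend)
    finally have le: "(\<delta> + n div m) choose (n div m) \<le> (\<delta> + n) choose \<delta>" .
    show "norm (RF m \<delta> h $ n) \<le> norm (Abs_fps (\<lambda>n. of_nat ((\<delta>+n) choose \<delta>) * H $ (n+1)) $ n)"
      using n le by (auto simp: RF_def H_def fps_expansion_tcoef norm_mult intro!: mult_right_mono)
  qed
  finally show ?thesis .
qed

lemma RF_eval:
  assumes m: "m \<ge> 1" and hol: "h holomorphic_on ball 0 1" and z: "z \<in> ball 0 1"
  shows "rusch_quot m \<delta> h z = eval_fps (RF m \<delta> h) z"
proof -
  have "ereal (norm z) < 1" using z by simp
  also have "1 \<le> fps_conv_radius (RF m \<delta> h)" by (rule RF_conv[OF m hol])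
  finally have "summable (\<lambda>n. RF m \<delta> h $ n * z^n)" by (rule summable_fps)
  hence s: "(\<lambda>n. RF m \<delta> h $ n * z^n) sums eval_fps (RF m \<delta> h) z"
    by (simp add: eval_fps_def summable_sums)
  have sm: "strict_mono (\<lambda>k. m * k)" using m by (auto simp: strict_mono_def)
  have "(\<lambda>k. RF m \<delta> h $ (m*k) * z^(m*k)) sums eval_fps (RF m \<delta> h) z"
    by (subst sums_mono_reindex[OF sm]) (use s in \<open>auto simp: RF_def\<close>)
  hence "(\<lambda>k. RF m \<delta> h $ (m*Suc k) * z^(m*Suc k)) sums (eval_fps (RF m \<delta> h) z - 1)"
    using sums_Suc_iff[of "\<lambda>k. RF m \<delta> h $ (m*k) * z^(m*k)" "eval_fps (RF m \<delta> h) z - 1"]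
    by (simp add: RF_def)
  moreover have eqk: "RF m \<delta> h $ (m*Suc k) * z^(m*Suc k) =
     of_nat ((\<delta> + Suc k) choose (Suc k)) * tcoef h (m * Suc k + 1) * z ^ (m * Suc k)" for k
  proof -
    have "RF m \<delta> h $ (m*Suc k) = of_nat ((\<delta> + Suc k) choose (Suc k)) * tcoef h (m * Suc k + 1)"
      using m unfolding RF_def by (simp del: binomial_Suc_Suc)
    thus ?thesis by simp
  qed
  ultimately have "(\<lambda>k. of_nat ((\<delta> + Suc k) choose (Suc k)) * tcoef h (m * Suc k + 1) * z ^ (m * Suc k)) sums (eval_fps (RF m \<delta> h) z - 1)"
    by (simp only: eqk)
  hence "(\<Sum>k. of_nat ((\<delta> + Suc k) choose (Suc k)) * tcoef h (m * Suc k + 1) * z ^ (m * Suc k)) = eval_fps (RF m \<delta> h) z - 1"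
    by (rule sums_unique[symmetric])
  thus ?thesis unfolding rusch_quot_def by simp
qed



definition JF :: "nat \<Rightarrow> complex \<Rightarrow> real \<Rightarrow> real \<Rightarrow> nat \<Rightarrow> (complex \<Rightarrow> complex) \<Rightarrow> complex fps" where
  "JF m \<tau> lam \<gamma> \<delta> h = 1 + fps_const (1 / \<tau>) *
     (fps_const (of_real ((1 - lam) * (1 - \<gamma>))) * RF m \<delta> h
      + fps_const (of_real (lam * (\<gamma> + 1) + \<gamma>)) * fps_deriv (fps_X * RF m \<delta> h)
      + fps_const (of_real (lam * \<gamma>)) * (fps_X * fps_deriv (fps_deriv (fps_X * RF m \<delta> h)) - 2) - 1)"

lemma ereal_lt_ge1: "(1::ereal) \<le> R \<Longrightarrow> x < 1 \<Longrightarrow> ereal x < R"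
  by (metis less_ereal.simps(1) one_ereal_def order.strict_trans2)

lemma rq_holo:
  assumes m: "m \<ge> 1" and hol: "h holomorphic_on ball 0 1"
  shows "rusch_quot m \<delta> h holomorphic_on ball 0 1"
proof -
  have "eval_fps (RF m \<delta> h) holomorphic_on ball 0 1"
    by (rule holomorphic_on_eval_fps) (use RF_conv[OF m hol, of \<delta>] in \<open>auto simp: subset_iff intro: ereal_lt_ge1\<close>)
  thus ?thesis by (rule holomorphic_cong[THEN iffD1, rotated 2]) (auto simp: RF_eval[OF m hol])
qed

lemma rq_exp:
  assumes m: "m \<ge> 1" and hol: "h holomorphic_on ball 0 1"
  shows "rusch_quot m \<delta> h has_fps_expansion RF m \<delta> h"
  unfolding has_fps_expansion_def
proof
  show "0 < fps_conv_radius (RF m \<delta> h)" using ereal_lt_ge1[OF RF_conv[OF m hol, of \<delta>], of 0] by (simp add: zero_ereal_def)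
  have "eventually (\<lambda>z. z \<in> ball 0 1) (nhds (0::complex))" by (intro eventually_nhds_in_open) auto
  thus "\<forall>\<^sub>F z in nhds 0. eval_fps (RF m \<delta> h) z = rusch_quot m \<delta> h z"
    by eventually_elim (simp add: RF_eval[OF m hol])
qed

lemma J_holo:
  assumes m: "m \<ge> 1" and hol: "h holomorphic_on ball 0 1"
  shows "J_fun m \<tau> lam \<gamma> \<delta> h holomorphic_on ball 0 1"
proof -
  have r: "rusch m \<delta> h holomorphic_on ball 0 1"
    unfolding rusch_def[abs_def] by (intro holomorphic_intros rq_holo[OF m hol])
  show ?thesis unfolding J_fun_def[abs_def]
    by (intro holomorphic_intros rq_holo[OF m hol] r) auto
qed

lemma J_exp:
  assumes m: "m \<ge> 1" and hol: "h holomorphic_on ball 0 1"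
  shows "J_fun m \<tau> lam \<gamma> \<delta> h has_fps_expansion JF m \<tau> lam \<gamma> \<delta> h"
proof -
  have r: "rusch m \<delta> h has_fps_expansion fps_X * RF m \<delta> h"
    unfolding rusch_def[abs_def] by (intro fps_expansion_intros rq_exp[OF m hol])
  show ?thesis unfolding J_fun_def[abs_def] JF_def
    by (intro fps_expansion_intros rq_exp[OF m hol] r)
qed

lemma JF_nth:
  assumes "n \<ge> 1"
  shows "JF m \<tau> lam \<gamma> \<delta> h $ n = (1 / \<tau>) * of_real ((1 - lam) * (1 - \<gamma>) + (lam * (\<gamma> + 1) + \<gamma>) * (real n + 1)
            + lam * \<gamma> * real n * (real n + 1)) * RF m \<delta> h $ n"
proof -
  obtain k where k: "n = Suc k" using assms by (cases n) auto
  show ?thesis unfolding JF_def k by (simp add: algebra_simps fps_numeral_nth)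
qed

lemma JF_0: "JF m \<tau> lam \<gamma> \<delta> h $ 0 = 1"
  unfolding JF_def by (cases "\<tau> = 0") (simp_all add: RF_def fps_numeral_nth field_simps)



lemma K_pow_zero:
  fixes K :: "complex fps"
  assumes "\<And>j. \<not> m dvd j \<Longrightarrow> K $ j = 0" "\<not> m dvd j"
  shows "(K ^ i) $ j = 0"
  using assms(2)
proof (induction i arbitrary: j)
  case 0
  then show ?case by (cases j) auto
next
  case (Suc i)
  have "(K * K^i) $ j = (\<Sum>a=0..j. K$a * (K^i)$(j - a))" by (rule fps_mult_nth)
  also have "\<dots> = 0"
  proof (rule sum.neutral, intro ballI)
    fix a assume a: "a \<in> {0..j}"
    show "K$a * (K^i)$(j - a) = 0"
    proof (cases "m dvd a")
      case True
      have "\<not> m dvd (j - a)"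
      proof
        assume "m dvd (j - a)"
        with True have "m dvd (a + (j - a))" by (rule dvd_add)
        with a Suc.prems show False by simp
      qed
      then show ?thesis using Suc.IH by simp
    next
      case False then show ?thesis using assms(1) by simp
    qed
  qed
  finally show ?case by simp
qed

lemma K_pow_m:
  fixes K :: "complex fps"
  assumes m: "m \<ge> 1" and K: "\<And>j. \<not> m dvd j \<Longrightarrow> K $ j = 0" "K $ 0 = 1"
  shows "(K ^ i) $ m = of_nat i * K $ m"
proof (induction i)
  case 0 then show ?case using m by simp
next
  case (Suc i)
  have p0: "(K^i) $ 0 = 1" using K(2) by (simp add: fps_nth_power_0)
  have "(K * K^i) $ m = (\<Sum>a=0..m. K$a * (K^i)$(m - a))" by (rule fps_mult_nth)
  also have "\<dots> = (\<Sum>a\<in>{0,m}. K$a * (K^i)$(m - a))"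
  proof (rule sum.mono_neutral_right)
    show "\<forall>a\<in>{0..m} - {0, m}. K$a * (K^i)$(m - a) = 0"
    proof
      fix a assume a: "a \<in> {0..m} - {0, m}"
      hence "\<not> m dvd a" using m by (auto dest: dvd_imp_le)
      thus "K$a * (K^i)$(m - a) = 0" using K(1) by simp
    qed
  qed auto
  also have "\<dots> = (K^i) $ m + K $ m" using m K(2) p0 by simp
  finally show ?case using Suc.IH by (simp add: algebra_simps)
qed

lemma dvd_le_2m:
  fixes m j :: nat
  assumes "m dvd j" "j \<le> 2 * m" "m \<ge> 1"
  shows "j = 0 \<or> j = m \<or> j = 2 * m"
proof -
  obtain k where k: "j = m * k" using assms(1) by blast
  have "m * k \<le> m * 2" using assms(2) k by (simp add: mult.commute)
  hence "k \<le> 2" using assms(3) by simp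
  hence "k = 0 \<or> k = 1 \<or> k = 2" by auto
  thus ?thesis using k by auto
qed

lemma compose_coeffs:
  fixes F G :: "complex fps"
  assumes m: "m \<ge> 1" and F0: "F $ 0 = 0" and F1: "F $ 1 = 1"
    and Fz: "\<And>j. \<not> m dvd j \<Longrightarrow> F $ (j+1) = 0" and GF: "G oo F = fps_X"
  shows "G $ (m+1) = - F $ (m+1)" and "G $ (2*m+1) = of_nat (m+1) * (F $ (m+1)) ^ 2 - F $ (2*m+1)"
proof -
  define K where "K = Abs_fps (\<lambda>j. F $ (j+1))"
  have FK: "F = fps_X * K" by (rule fps_ext) (auto simp: K_def F0 gr0_conv_Suc)
  have K0: "K $ 0 = 1" using F1 by (simp add: K_def)
  have Kz: "\<And>j. \<not> m dvd j \<Longrightarrow> K $ j = 0" using Fz by (simp add: K_def)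
  have Fi: "(F ^ i) $ n = (if n < i then 0 else (K^i) $ (n - i))" for i n
    unfolding FK power_mult_distrib by (rule fps_X_power_mult_nth)
  have Km: "K $ j = F $ (j+1)" for j by (simp add: K_def)
  have "(K ^ (m+1)) $ m = of_nat (m+1) * K $ m" by (rule K_pow_m[OF m]) (use Kz K0 in auto)
  hence Kpm: "(K ^ (m+1)) $ m = of_nat (m+1) * F $ (m+1)" by (simp only: Km)
  have Kpm': "K ^ Suc m $ m = (1 + of_nat m) * F $ Suc m" using Kpm by (simp del: power_Suc)
  have Kp0: "(K^i) $ 0 = 1" for i using K0 by (simp add: fps_nth_power_0)
  have c: "(G oo F) $ n = (\<Sum>i=0..n. G$i * (F^i)$n)" for n by (rule fps_compose_nth)
  have "(G oo F) $ 1 = G $ 1" using F1 by (simp add: c F0)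
  hence G1: "G $ 1 = 1" using GF by simp
  have "(G oo F) $ (m+1) = (\<Sum>i\<in>{1, m+1}. G$i * (F^i)$(m+1))"
    unfolding c
  proof (rule sum.mono_neutral_right)
    show "\<forall>i\<in>{0..m+1} - {1, m+1}. G$i * (F^i)$(m+1) = 0"
    proof
      fix i assume i: "i \<in> {0..m+1} - {1, m+1}"
      show "G$i * (F^i)$(m+1) = 0"
      proof (cases "i = 0")
        case True then show ?thesis by simp
      next
        case False
        have "\<not> m dvd (m + 1 - i)"
        proof
          assume d: "m dvd (m + 1 - i)"
          have "m + 1 - i \<le> 2*m" using m i False by auto
          from dvd_le_2m[OF d this m] have "m + 1 - i = 0 \<or> m + 1 - i = m \<or> m + 1 - i = 2*m" .
          thus False using i False m by auto
        qed
        then show ?thesis using i by (simp add: Fi K_pow_zero[OF Kz])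
      qed
    qed
  qed auto
  also have "\<dots> = G $ 1 * F $ (m+1) + G $ (m+1)" using m F1 by (simp add: Fi Kp0 Km)
  finally have "G $ 1 * F $ (m+1) + G $ (m+1) = 0" using GF m by simp
  thus Gm: "G $ (m+1) = - F $ (m+1)" using G1 by (simp add: add_eq_0_iff)
  have "(G oo F) $ (2*m+1) = (\<Sum>i\<in>{1, m+1, 2*m+1}. G$i * (F^i)$(2*m+1))"
    unfolding c
  proof (rule sum.mono_neutral_right)
    show "\<forall>i\<in>{0..2*m+1} - {1, m+1, 2*m+1}. G$i * (F^i)$(2*m+1) = 0"
    proof
      fix i assume i: "i \<in> {0..2*m+1} - {1, m+1, 2*m+1}"
      show "G$i * (F^i)$(2*m+1) = 0"
      proof (cases "i = 0")
        case True then show ?thesis by simp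
      next
        case False
        have "\<not> m dvd (2*m + 1 - i)"
        proof
          assume d: "m dvd (2*m + 1 - i)"
          have "2*m + 1 - i \<le> 2*m" using m i False by auto
          from dvd_le_2m[OF d this m] have "2*m + 1 - i = 0 \<or> 2*m + 1 - i = m \<or> 2*m + 1 - i = 2*m" .
          thus False using i False m by auto
        qed
        then show ?thesis using i by (simp add: Fi K_pow_zero[OF Kz])
      qed
    qed
  qed auto
  also have "\<dots> = G $ 1 * F $ (2*m+1) + G $ (m+1) * (of_nat (m+1) * F $ (m+1)) + G $ (2*m+1)"
    using m F1 by (simp add: Fi Kp0 Kpm Kpm' Km del: power_Suc)
  finally have "G $ 1 * F $ (2*m+1) + G $ (m+1) * (of_nat (m+1) * F $ (m+1)) + G $ (2*m+1) = 0"
    using GF m by simp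
  thus "G $ (2*m+1) = of_nat (m+1) * (F $ (m+1)) ^ 2 - F $ (2*m+1)"
    using G1 Gm by (simp add: algebra_simps power2_eq_square add_eq_0_iff)
qed



lemma inv_coeffs:
  assumes m: "m \<ge> 1" and Am: "A_m m f" and ie: "inv_ext f g"
  shows "tcoef g (m+1) = - tcoef f (m+1)"
    and "tcoef g (2*m+1) = of_nat (m+1) * (tcoef f (m+1))^2 - tcoef f (2*m+1)"
proof -
  have hf: "f holomorphic_on ball 0 1" "f 0 = 0" "tcoef f 1 = 1"
    and Az: "\<And>n. n mod m \<noteq> 1 mod m \<Longrightarrow> tcoef f n = 0" using Am by (auto simp: A_m_def)
  have hg: "g holomorphic_on ball 0 1" and gf: "\<And>z. z \<in> ball 0 1 \<Longrightarrow> f z \<in> ball 0 1 \<Longrightarrow> g (f z) = z"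
    using ie by (auto simp: inv_ext_def)
  define F where "F = fps_expansion f 0"
  define G where "G = fps_expansion g 0"
  have eF: "f has_fps_expansion F" unfolding F_def by (rule has_fps_expansion_fps_expansion[OF _ _ hf(1)]) auto
  have eG: "g has_fps_expansion G" unfolding G_def by (rule has_fps_expansion_fps_expansion[OF _ _ hg]) auto
  have F0: "F $ 0 = 0" using hf(2) by (simp add: F_def fps_expansion_def)
  have F1: "F $ 1 = 1" using hf(3) by (simp add: F_def fps_expansion_tcoef)
  have Fz: "F $ (j+1) = 0" if "\<not> m dvd j" for j
  proof -
    have "(j+1) mod m \<noteq> 1 mod m" using mod_eq_dvd_iff_nat[of 1 "j+1" m] that by auto
    thus ?thesis using Az by (simp add: F_def fps_expansion_tcoef)
  qed
  have c1: "(g \<circ> f) has_fps_expansion (G oo F)" by (rule has_fps_expansion_compose[OF eG eF F0])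
  have "open (ball 0 1 \<inter> f -` ball 0 1)"
    by (rule continuous_open_preimage) (use hf(1) holomorphic_on_imp_continuous_on in auto)
  hence "eventually (\<lambda>z. z \<in> ball 0 1 \<inter> f -` ball 0 1) (nhds 0)"
    by (rule eventually_nhds_in_open) (use hf(2) in auto)
  hence c2: "(g \<circ> f) has_fps_expansion fps_X"
    unfolding has_fps_expansion_def by (auto elim!: eventually_mono simp: gf)
  have "G oo F = fps_X" by (rule fps_expansion_unique_complex[OF c1 c2])
  from compose_coeffs[OF m F0 F1 Fz this]
  show "tcoef g (m+1) = - tcoef f (m+1)"
    and "tcoef g (2*m+1) = of_nat (m+1) * (tcoef f (m+1))^2 - tcoef f (2*m+1)"
    by (simp_all add: F_def G_def fps_expansion_tcoef)
qed

lemma J_bound: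
  assumes m: "m \<ge> 1" and hol: "h holomorphic_on ball 0 1"
    and re: "\<forall>z\<in>ball 0 1. Re (J_fun m \<tau> lam \<gamma> \<delta> h z) > \<beta>" and n: "n \<ge> 1"
  shows "norm (JF m \<tau> lam \<gamma> \<delta> h $ n) \<le> 2 * (1 - \<beta>)"
proof -
  note e = J_exp[OF m hol, of \<tau> lam \<gamma> \<delta>]
  have "JF m \<tau> lam \<gamma> \<delta> h $ 0 = (deriv^^0) (J_fun m \<tau> lam \<gamma> \<delta> h) 0 / fact 0"
    by (rule fps_nth_fps_expansion[OF e])
  hence J0: "J_fun m \<tau> lam \<gamma> \<delta> h 0 = 1" by (simp add: JF_0)
  have "JF m \<tau> lam \<gamma> \<delta> h $ n = (deriv^^n) (J_fun m \<tau> lam \<gamma> \<delta> h) 0 / fact n"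
    by (rule fps_nth_fps_expansion[OF e])
  also have "norm \<dots> \<le> 2 * (Re (J_fun m \<tau> lam \<gamma> \<delta> h 0) - \<beta>)"
    by (rule carath[OF J_holo[OF m hol] _ n]) (use re in auto)
  finally show ?thesis by (simp add: J0)
qed

lemma RF_m: "m \<ge> 1 \<Longrightarrow> RF m \<delta> h $ m = of_nat (\<delta> + 1) * tcoef h (m+1)"
  by (simp add: RF_def)

lemma RF_2m: "m \<ge> 1 \<Longrightarrow> RF m \<delta> h $ (2*m) = of_real ((real \<delta> + 1) * (real \<delta> + 2) / 2) * tcoef h (2*m+1)"
proof -
  assume m: "m \<ge> 1"
  have "2 * ((\<delta> + 2) choose 2) = (\<delta> + 2) * (\<delta> + 1)"
    using Suc_times_binomial[of 1 "\<delta>+1"] by (simp add: numeral_2_eq_2)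
  hence "real (2 * ((\<delta> + 2) choose 2)) = real ((\<delta> + 2) * (\<delta> + 1))" by (simp only:)
  hence "2 * real ((\<delta> + 2) choose 2) = (real \<delta> + 2) * (real \<delta> + 1)" by (simp only: of_nat_mult of_nat_add of_nat_numeral of_nat_1)
  hence "real ((\<delta> + 2) choose 2) = (real \<delta> + 1) * (real \<delta> + 2) / 2" by (simp add: field_simps)
  hence c: "(of_nat ((\<delta> + 2) choose 2) :: complex) = of_real ((real \<delta> + 1) * (real \<delta> + 2) / 2)"
    by (metis of_real_of_nat_eq)
  have "RF m \<delta> h $ (2*m) = of_nat ((\<delta> + 2) choose 2) * tcoef h (2*m+1)"
    using m by (simp add: RF_def)
  then show ?thesis by (simp only: c)
qed



lemma sqrt4: "sqrt (4 * x) = 2 * sqrt (x::real)"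
proof -
  have "sqrt (4 * x) = sqrt (2^2) * sqrt x" by (simp add: real_sqrt_mult)
  also have "sqrt (2^2) = (2::real)" by simp
  finally show ?thesis .
qed

theorem theorem2:
  fixes lam \<gamma> \<beta> :: real and \<tau> :: complex and \<delta> m :: nat and f :: "complex \<Rightarrow> complex"
  assumes "lam \<ge> 0" and "0 \<le> \<gamma>" and "\<gamma> \<le> 1" and "0 \<le> \<beta>" and "\<beta> < 1"
    and "\<tau> \<noteq> 0" and "m \<ge> 1"
    and "Theta m \<tau> lam \<gamma> \<delta> \<beta> f"
  shows "(norm (tcoef f (m + 1)) \<le>
           min (2 * norm \<tau> * (1 - \<beta>) /
                  ((real \<delta> + 1) * (1 + real m * (lam + \<gamma>) + lam * \<gamma> * ((real m + 1)^2 + 1))))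
               (2 * sqrt (2 * norm \<tau> * (1 - \<beta>) /
                  ((real \<delta> + 1) * (real \<delta> + 2) * (real m + 1) * Phi1 lam \<gamma> m)))) \<and>
         norm (tcoef f (2 * m + 1)) \<le>
           4 * norm \<tau> * (1 - \<beta>) /
             ((real \<delta> + 1) * (real \<delta> + 2) * (1 + 2 * (lam + \<gamma>) * real m + lam * \<gamma> * ((2 * real m + 1)^2 + 1)))"
proof -
  note lam = assms(1) and g0 = assms(2) and b1 = assms(5) and tnz = assms(6) and m = assms(7)
  from assms(8) have Sig: "Sigma_m m f" and "\<exists>g. inv_ext f g \<and>
        (\<forall>z\<in>ball 0 1. Re (J_fun m \<tau> lam \<gamma> \<delta> f z) > \<beta>) \<and>
        (\<forall>w\<in>ball 0 1. Re (J_fun m \<tau> lam \<gamma> \<delta> g w) > \<beta>)" unfolding Theta_def by blast+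
  then obtain g where ie: "inv_ext f g" and reF: "\<forall>z\<in>ball 0 1. Re (J_fun m \<tau> lam \<gamma> \<delta> f z) > \<beta>"
      and reG: "\<forall>w\<in>ball 0 1. Re (J_fun m \<tau> lam \<gamma> \<delta> g w) > \<beta>" by blast
  have Am: "A_m m f" using Sig by (simp add: Sigma_m_def)
  have hf: "f holomorphic_on ball 0 1" using Am by (simp add: A_m_def)
  have hg: "g holomorphic_on ball 0 1" using ie by (simp add: inv_ext_def)
  define a where "a = tcoef f (m+1)"
  define c where "c = tcoef f (2*m+1)"
  define A1 where "A1 = 1 + real m * (lam + \<gamma>) + lam * \<gamma> * ((real m + 1)^2 + 1)"
  define P where "P = Phi1 lam \<gamma> m"
  define B where "B = (real \<delta> + 1) * (real \<delta> + 2) / 2"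
  define T where "T = norm \<tau>"
  have KA: "(1 - lam) * (1 - \<gamma>) + (lam * (\<gamma> + 1) + \<gamma>) * (real m + 1) + lam * \<gamma> * real m * (real m + 1) = A1"
    by (simp add: A1_def algebra_simps power2_eq_square)
  have KP: "(1 - lam) * (1 - \<gamma>) + (lam * (\<gamma> + 1) + \<gamma>) * (real (2*m) + 1) + lam * \<gamma> * real (2*m) * (real (2*m) + 1) = P"
    by (simp add: P_def Phi1_def algebra_simps power2_eq_square)
  have A1pos: "A1 > 0" unfolding A1_def using lam g0 by (intro add_pos_nonneg) auto
  have Ppos: "P > 0" unfolding P_def Phi1_def using lam g0 by (intro add_pos_nonneg) auto
  have Bpos: "B > 0" unfolding B_def by simp
  have Tpos: "T > 0" unfolding T_def using tnz by simp
  have m2: "1 \<le> 2*m" using m by simp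
  have e1: "JF m \<tau> lam \<gamma> \<delta> f $ m = (1/\<tau>) * of_real A1 * (of_nat (\<delta>+1) * a)"
    by (simp only: JF_nth[OF m] KA RF_m[OF m] a_def)
  have e2: "JF m \<tau> lam \<gamma> \<delta> f $ (2*m) = (1/\<tau>) * of_real P * (of_real B * c)"
    by (simp only: JF_nth[OF m2] KP RF_2m[OF m] c_def B_def)
  have e3: "JF m \<tau> lam \<gamma> \<delta> g $ (2*m) = (1/\<tau>) * of_real P * (of_real B * (of_nat (m+1) * a^2 - c))"
    by (simp only: JF_nth[OF m2] KP RF_2m[OF m] inv_coeffs(2)[OF m Am ie] a_def c_def B_def)
  have n1: "norm ((1/\<tau>) * of_real A1 * (of_nat (\<delta>+1) * a)) \<le> 2 * (1 - \<beta>)"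
    using J_bound[OF m hf reF m] e1 by simp
  have n2: "norm ((1/\<tau>) * of_real P * (of_real B * c)) \<le> 2 * (1 - \<beta>)"
    using J_bound[OF m hf reF m2] e2 by simp
  have n3: "norm ((1/\<tau>) * of_real P * (of_real B * (of_nat (m+1) * a^2 - c))) \<le> 2 * (1 - \<beta>)"
    using J_bound[OF m hg reG m2] e3 by simp
  have "norm ((1/\<tau>) * of_real A1 * (of_nat (\<delta>+1) * a)) = (1 / norm \<tau>) * abs A1 * (real (\<delta>+1) * norm a)"
    by (simp only: norm_mult norm_divide norm_one norm_of_nat norm_of_real)
  also have "\<dots> = norm a * ((real \<delta> + 1) * A1) / T" using A1pos unfolding T_def by simp
  finally have "norm a * ((real \<delta> + 1) * A1) / T \<le> 2 * (1 - \<beta>)" using n1 by simp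
  hence "norm a * ((real \<delta> + 1) * A1) \<le> 2 * (1 - \<beta>) * T" using Tpos by (simp add: pos_divide_le_eq)
  moreover have d1: "(real \<delta> + 1) * A1 > 0" using A1pos by simp
  ultimately have r1: "norm a \<le> 2 * T * (1 - \<beta>) / ((real \<delta> + 1) * A1)"
    by (subst pos_le_divide_eq[OF d1]) (simp add: algebra_simps)
  have "norm c * (P * B) / T \<le> 2 * (1 - \<beta>)"
    using n2 Ppos Bpos unfolding T_def by (simp add: norm_mult norm_divide field_simps)
  hence "norm c * (P * B) \<le> 2 * (1 - \<beta>) * T" using Tpos by (simp add: pos_divide_le_eq)
  moreover have d2: "P * B > 0" using Ppos Bpos by simp
  ultimately have "norm c \<le> 2 * T * (1 - \<beta>) / (P * B)"
    by (subst pos_le_divide_eq[OF d2]) (simp add: algebra_simps)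
  hence r3: "norm c \<le> 4 * T * (1 - \<beta>) / ((real \<delta> + 1) * (real \<delta> + 2) * P)"
    by (simp add: B_def field_simps)
  have sum: "(1/\<tau>) * of_real P * (of_real B * c) + (1/\<tau>) * of_real P * (of_real B * (of_nat (m+1) * a^2 - c))
     = (1/\<tau>) * of_real P * of_real B * of_nat (m+1) * a^2" by (simp add: algebra_simps add_divide_distrib)
  have "norm ((1/\<tau>) * of_real P * of_real B * of_nat (m+1) * a^2) \<le> 4 * (1 - \<beta>)"
    using norm_triangle_ineq[of "(1/\<tau>) * of_real P * (of_real B * c)" "(1/\<tau>) * of_real P * (of_real B * (of_nat (m+1) * a^2 - c))"]
      n2 n3 unfolding sum by linarith
  moreover have "norm ((1/\<tau>) * of_real P * of_real B * of_nat (m+1) * a^2) = (1 / norm \<tau>) * abs P * abs B * real (m+1) * norm a ^ 2"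
    by (simp only: norm_mult norm_divide norm_one norm_of_nat norm_of_real norm_power)
  ultimately have "norm a ^ 2 * (P * B * (real m + 1)) / T \<le> 4 * (1 - \<beta>)"
    using Ppos Bpos unfolding T_def by (simp add: algebra_simps)
  hence "norm a ^ 2 * (P * B * (real m + 1)) \<le> 4 * (1 - \<beta>) * T" using Tpos by (simp add: pos_divide_le_eq)
  moreover have d3: "P * B * (real m + 1) > 0" using Ppos Bpos by simp
  ultimately have "norm a ^ 2 \<le> 4 * (1 - \<beta>) * T / (P * B * (real m + 1))"
    by (subst pos_le_divide_eq[OF d3]) (simp add: algebra_simps)
  also have "\<dots> = 4 * (2 * T * (1 - \<beta>) / ((real \<delta> + 1) * (real \<delta> + 2) * (real m + 1) * P))"
    by (simp add: B_def field_simps)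
  finally have "norm a ^ 2 \<le> 4 * (2 * T * (1 - \<beta>) / ((real \<delta> + 1) * (real \<delta> + 2) * (real m + 1) * P))" .
  hence "norm a \<le> sqrt (4 * (2 * T * (1 - \<beta>) / ((real \<delta> + 1) * (real \<delta> + 2) * (real m + 1) * P)))"
    by (rule real_le_rsqrt)
  hence r2: "norm a \<le> 2 * sqrt (2 * T * (1 - \<beta>) / ((real \<delta> + 1) * (real \<delta> + 2) * (real m + 1) * P))"
    by (simp only: sqrt4)
  show ?thesis
    using r1 r2 r3 unfolding a_def c_def T_def A1_def P_def Phi1_def by simp
qed

end
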